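(* Let $G:=F_0*X_0*X_1$ be a free product of groups and let $h$ be an automorphism of $G$ which fixes $F_0$ pointwise, leaves $X_0*X_1$ invariant, and acts on $X_0*X_1$ as an automorphism of prime order $p$ whose fixed point set is exactly $X_0$. Suppose that $h$ fixes the conjugacy class of an element $a\in G\setminus\big((F_0*X_0)\cup(X_0*X_1)\big)$ which is cyclically reduced of the form $a=a_1x_1a_2x_2\cdots a_mx_m$ with $a_i\in F_0\setminus\{1\}$ and $x_i\in (X_0*X_1)\setminus\{1\}$ for $i=1,\dots,m$. Then there is a permutation $\sigma$ in the subgroup $\langle(1\,2\,\cdots\,m)\rangle$ of $Sym(\{1,\dots,m\})$ such that (i) $a_i=a_{\sigma(i)}$ and $h(x_i)=x_{\sigma(i)}$ for all $i$, and (ii) $p$ divides the order of $\sigma$.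
   Context: "$h$ fixes the conjugacy class of $a$" means $h(a)$ is conjugate to $a$ in $G$. Cyclically reduced refers to the free product decomposition $G=F_0*(X_0*X_1)$. *)

theory Defs
  imports "HOL-Algebra.Algebra"
begin

definition alt_word :: "('a, 'b) monoid_scheme \<Rightarrow> 'a set \<Rightarrow> 'a set \<Rightarrow> (bool \<times> 'a) list \<Rightarrow> bool" where
  "alt_word G A B w \<longleftrightarrow>
     (\<forall>fx \<in> set w. snd fx \<in> (if fst fx then A else B) - {\<one>\<^bsub>G\<^esub>}) \<and>
     (\<forall>i. Suc i < length w \<longrightarrow> fst (w ! i) \<noteq> fst (w ! Suc i))"

definition word_val :: "('a, 'b) monoid_scheme \<Rightarrow> (bool \<times> 'a) list \<Rightarrow> 'a" where
  "word_val G w = foldr (\<lambda>fx r. snd fx \<otimes>\<^bsub>G\<^esub> r) w \<one>\<^bsub>G\<^esub>"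

definition is_free_product :: "('a, 'b) monoid_scheme \<Rightarrow> 'a set \<Rightarrow> 'a set \<Rightarrow> bool" where
  "is_free_product G A B \<longleftrightarrow> group G \<and> subgroup A G \<and> subgroup B G \<and>
     generate G (A \<union> B) = carrier G \<and>
     (\<forall>w. w \<noteq> [] \<and> alt_word G A B w \<longrightarrow> word_val G w \<noteq> \<one>\<^bsub>G\<^esub>)"

definition alt_prod :: "('a, 'b) monoid_scheme \<Rightarrow> (nat \<Rightarrow> 'a) \<Rightarrow> (nat \<Rightarrow> 'a) \<Rightarrow> nat \<Rightarrow> 'a" where
  "alt_prod G as xs m = foldr (\<lambda>i r. as i \<otimes>\<^bsub>G\<^esub> xs i \<otimes>\<^bsub>G\<^esub> r) [1..<Suc m] \<one>\<^bsub>G\<^esub>"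

definition cyc :: "nat \<Rightarrow> nat \<Rightarrow> nat" where
  "cyc m i = (if 1 \<le> i \<and> i \<le> m then i mod m + 1 else i)"

definition perm_order :: "(nat \<Rightarrow> nat) \<Rightarrow> nat" where
  "perm_order \<sigma> = (LEAST n. 0 < n \<and> \<sigma> ^^ n = id)"

end

theory Submission
  imports Defs
begin

fun lmul :: "('a,'b) monoid_scheme \<Rightarrow> bool \<Rightarrow> 'a \<Rightarrow> (bool\<times>'a) list \<Rightarrow> (bool\<times>'a) list" where
  "lmul G f y [] = (if y = \<one>\<^bsub>G\<^esub> then [] else [(f,y)])"
| "lmul G f y ((f',x)#w) = (if y = \<one>\<^bsub>G\<^esub> then (f',x)#w
     else if f = f' then (if y \<otimes>\<^bsub>G\<^esub> x = \<one>\<^bsub>G\<^esub> then w else (f, y \<otimes>\<^bsub>G\<^esub> x)#w)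
     else (f,y)#(f',x)#w)"

definition invw :: "('a,'b) monoid_scheme \<Rightarrow> (bool\<times>'a) list \<Rightarrow> (bool\<times>'a) list" where
  "invw G w = rev (map (\<lambda>(f,x). (f, inv\<^bsub>G\<^esub> x)) w)"

locale fprod =
  fixes G :: "('a,'b) monoid_scheme" (structure) and A B :: "'a set"
  assumes fp: "is_free_product G A B"
begin

lemma grp: "group G" using fp unfolding is_free_product_def by blast
sublocale group G by (rule grp)

abbreviation alt where "alt \<equiv> alt_word G A B"
abbreviation val where "val \<equiv> word_val G"
abbreviation fac where "fac f \<equiv> (if f then A else B)"

lemma fac_sub: "subgroup (fac f) G"
  using fp unfolding is_free_product_def by (cases f) auto

lemma fac_carr: "x \<in> fac f \<Longrightarrow> x \<in> carrier G"
  by (rule subgroup.mem_carrier[OF fac_sub])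

lemma fac_mult: "x \<in> fac f \<Longrightarrow> y \<in> fac f \<Longrightarrow> x \<otimes> y \<in> fac f"
  by (rule subgroup.m_closed[OF fac_sub])

lemma fac_inv: "x \<in> fac f \<Longrightarrow> inv x \<in> fac f"
  by (rule subgroup.m_inv_closed[OF fac_sub])

lemma fac_one: "\<one> \<in> fac f"
  by (rule subgroup.one_closed[OF fac_sub])

lemma A_carr[simp]: "x \<in> A \<Longrightarrow> x \<in> carrier G"
  using fac_carr[of x True] by simp
lemma B_carr[simp]: "x \<in> B \<Longrightarrow> x \<in> carrier G"
  using fac_carr[of x False] by simp

lemma alt_Nil[simp]: "alt []" by (simp add: alt_word_def)

lemma alt_Cons: "alt ((f,x)#w) \<longleftrightarrow> x \<in> fac f - {\<one>} \<and> alt w \<and> (w \<noteq> [] \<longrightarrow> fst (hd w) \<noteq> f)"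
proof
  assume a: "alt ((f,x)#w)"
  have 1: "x \<in> fac f - {\<one>}" using a unfolding alt_word_def by auto
  have 2: "alt w" unfolding alt_word_def
  proof (intro conjI allI impI ballI)
    fix fx assume "fx \<in> set w" then show "snd fx \<in> (if fst fx then A else B) - {\<one>}"
      using a unfolding alt_word_def by auto
  next
    fix i assume "Suc i < length w"
    then have "Suc (Suc i) < length ((f,x)#w)" by simp
    then show "fst (w ! i) \<noteq> fst (w ! Suc i)" using a unfolding alt_word_def
      by (metis nth_Cons_Suc)
  qed
  have 3: "w \<noteq> [] \<longrightarrow> fst (hd w) \<noteq> f" using a unfolding alt_word_def
    by (cases w) (auto dest!: spec[of _ 0])
  show "x \<in> fac f - {\<one>} \<and> alt w \<and> (w \<noteq> [] \<longrightarrow> fst (hd w) \<noteq> f)" using 1 2 3 by blast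
next
  assume a: "x \<in> fac f - {\<one>} \<and> alt w \<and> (w \<noteq> [] \<longrightarrow> fst (hd w) \<noteq> f)"
  show "alt ((f,x)#w)" unfolding alt_word_def
  proof (intro conjI allI impI ballI)
    fix fx assume "fx \<in> set ((f,x)#w)"
    then show "snd fx \<in> (if fst fx then A else B) - {\<one>}" using a unfolding alt_word_def by auto
  next
    fix i assume i: "Suc i < length ((f,x)#w)"
    show "fst (((f,x)#w) ! i) \<noteq> fst (((f,x)#w) ! Suc i)"
    proof (cases i)
      case 0 then show ?thesis using a i by (cases w) auto
    next
      case (Suc j) then show ?thesis using a i unfolding alt_word_def by auto
    qed
  qed
qed

lemma alt_append: "alt (u @ v) \<longleftrightarrow> alt u \<and> alt v \<and> (u \<noteq> [] \<and> v \<noteq> [] \<longrightarrow> fst (last u) \<noteq> fst (hd v))"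
proof (induction u)
  case Nil then show ?case by simp
next
  case (Cons a u)
  obtain f x where a: "a = (f,x)" by force
  show ?case unfolding a append_Cons alt_Cons Cons.IH
    by (cases u) auto
qed

lemma val_Nil[simp]: "val [] = \<one>" by (simp add: word_val_def)
lemma val_Cons[simp]: "val ((f,x)#w) = x \<otimes> val w" by (simp add: word_val_def)

lemma alt_carr: "alt w \<Longrightarrow> val w \<in> carrier G"
proof (induction w)
  case (Cons a w) then show ?case by (cases a) (auto simp: alt_Cons fac_carr simp del: Diff_iff)
qed simp

lemma val_append: "alt u \<Longrightarrow> alt v \<Longrightarrow> val (u @ v) = val u \<otimes> val v"
proof (induction u)
  case (Cons a u) 
  obtain f x where a: "a = (f,x)" by force
  show ?case using Cons unfolding a by (auto simp: alt_Cons m_assoc fac_carr alt_carr)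
qed (simp add: alt_carr)

lemma alt_ne: "alt w \<Longrightarrow> w \<noteq> [] \<Longrightarrow> val w \<noteq> \<one>"
  using fp unfolding is_free_product_def by blast

lemma lmul: assumes "y \<in> fac f" "alt w"
  shows "alt (lmul G f y w) \<and> val (lmul G f y w) = y \<otimes> val w"
proof (cases w)
  case Nil then show ?thesis using assms fac_carr[OF assms(1)] by (auto simp: alt_Cons)
next
  case (Cons a w')
  obtain f' x where a: "a = (f',x)" by force
  have x: "x \<in> fac f' - {\<one>}" and w': "alt w'" and h: "w' \<noteq> [] \<longrightarrow> fst (hd w') \<noteq> f'"
    using assms(2) unfolding Cons a alt_Cons by auto
  have yc: "y \<in> carrier G" using fac_carr[OF assms(1)] .
  have xc: "x \<in> carrier G" using x fac_carr by blast
  have vc: "val w' \<in> carrier G" using alt_carr[OF w'] .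
  show ?thesis
  proof (cases "y = \<one>")
    case True then show ?thesis using assms xc vc unfolding Cons a by simp
  next
    case yn: False
    show ?thesis
    proof (cases "f = f'")
      case True
      show ?thesis
      proof (cases "y \<otimes> x = \<one>")
        case True
        then show ?thesis using \<open>f = f'\<close> yn w' xc yc vc unfolding Cons a
          by (simp add: m_assoc[symmetric])
      next
        case False
        have "y \<otimes> x \<in> fac f" using fac_mult assms(1) x True by auto
        then show ?thesis using False \<open>f = f'\<close> yn w' h xc yc vc unfolding Cons a
          by (simp add: m_assoc alt_Cons)
      qed
    next
      case False
      then show ?thesis using yn assms(1) x w' h unfolding Cons a by (auto simp: alt_Cons)
    qed
  qed
qed

lemma uniq: "alt v \<Longrightarrow> alt u \<Longrightarrow> val u = val v \<Longrightarrow> u = v"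
proof (induction v arbitrary: u)
  case Nil
  show ?case
  proof (rule ccontr)
    assume "u \<noteq> []"
    then show False using alt_ne[of u] Nil.prems by simp
  qed
next
  case (Cons b v')
  obtain f' y where b: "b = (f',y)" by force
  have y: "y \<in> fac f' - {\<one>}" and v': "alt v'" and h: "v' \<noteq> [] \<longrightarrow> fst (hd v') \<noteq> f'"
    using Cons.prems(1) unfolding b alt_Cons by auto
  have yc: "y \<in> carrier G" using fac_carr[OF DiffD1[OF y]] .
  have iy: "inv y \<in> fac f'" using fac_inv[OF DiffD1[OF y]] .
  have yn: "y \<noteq> \<one>" using y by simp
  have iyn: "inv y \<noteq> \<one>" using yn yc by simp
  note L = lmul[OF iy Cons.prems(2)]
  have "val (lmul G f' (inv y) u) = inv y \<otimes> val u" using L by simp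
  also have "\<dots> = inv y \<otimes> (y \<otimes> val v')" using Cons.prems(3) unfolding b by simp
  also have "\<dots> = val v'" using yc alt_carr[OF v'] by (simp add: m_assoc[symmetric])
  finally have "val (lmul G f' (inv y) u) = val v'" .
  then have eq: "lmul G f' (inv y) u = v'" using Cons.IH[OF v'] L by blast
  show ?case
  proof (cases u)
    case Nil
    then have "v' = [(f', inv y)]" using eq iyn by simp
    then show ?thesis using h by simp
  next
    case (Cons a u')
    obtain f x where a: "a = (f,x)" by force
    have xf: "x \<in> fac f - {\<one>}" using Cons.prems(2) unfolding \<open>u = a # u'\<close> a alt_Cons by simp
    have xc: "x \<in> carrier G" using fac_carr[OF DiffD1[OF xf]] .
    have ueq: "u = (f,x) # u'" using \<open>u = a # u'\<close> a by simp
    show ?thesis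
    proof (cases "f = f'")
      case True
      show ?thesis
      proof (cases "inv y \<otimes> x = \<one>")
        case True
        have "x = y \<otimes> (inv y \<otimes> x)" using xc yc by (simp add: m_assoc[symmetric])
        then have "x = y" using True yc by simp
        moreover have "v' = u'" using eq True \<open>f = f'\<close> iyn unfolding ueq by simp
        ultimately show ?thesis using \<open>f = f'\<close> unfolding ueq b by simp
      next
        case False
        then have "v' = (f, inv y \<otimes> x) # u'" using eq \<open>f = f'\<close> iyn unfolding ueq by simp
        then show ?thesis using h \<open>f = f'\<close> by simp
      qed
    next
      case False
      then have "v' = (f', inv y) # u" using eq iyn unfolding ueq by simp
      then show ?thesis using h by simp
    qed
  qed
qed

definition mulw :: "(bool\<times>'a) list \<Rightarrow> (bool\<times>'a) list \<Rightarrow> (bool\<times>'a) list" where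
  "mulw w1 w2 = foldr (\<lambda>(f,x) r. lmul G f x r) w1 w2"

lemma mulw: "alt w1 \<Longrightarrow> alt w2 \<Longrightarrow> alt (mulw w1 w2) \<and> val (mulw w1 w2) = val w1 \<otimes> val w2"
proof (induction w1)
  case Nil then show ?case by (simp add: mulw_def alt_carr)
next
  case (Cons a w1)
  obtain f x where a: "a = (f,x)" by force
  have x: "x \<in> fac f" and w1: "alt w1" using Cons.prems(1) unfolding a alt_Cons by auto
  have IH: "alt (mulw w1 w2) \<and> val (mulw w1 w2) = val w1 \<otimes> val w2" using Cons.IH w1 Cons.prems(2) by blast
  have "mulw (a#w1) w2 = lmul G f x (mulw w1 w2)" unfolding mulw_def a by simp
  then show ?case using lmul[OF x, of "mulw w1 w2"] IH fac_carr[OF x] alt_carr[OF w1] alt_carr[OF Cons.prems(2)]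
    unfolding a by (simp add: m_assoc)
qed

lemma gen_ex: "g \<in> generate G (A \<union> B) \<Longrightarrow> \<exists>w. alt w \<and> val w = g"
proof (induction rule: generate.induct)
  case one then show ?case by (intro exI[of _ "[]"]) simp
next
  case (incl h)
  then have "h \<in> fac (h \<in> A)" by auto
  then show ?case using lmul[of h "h \<in> A" "[]"] fac_carr by (intro exI[of _ "lmul G (h \<in> A) h []"]) auto
next
  case (inv h)
  then have "h \<in> fac (h \<in> A)" by auto
  then have "inv h \<in> fac (h \<in> A)" by (rule fac_inv)
  then show ?case using lmul[of "inv h" "h \<in> A" "[]"] fac_carr by (intro exI[of _ "lmul G (h \<in> A) (inv h) []"]) auto
next
  case (eng h1 h2)
  then obtain w1 w2 where "alt w1" "val w1 = h1" "alt w2" "val w2 = h2" by blast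
  then show ?case using mulw by blast
qed

lemma word_ex: "g \<in> carrier G \<Longrightarrow> \<exists>w. alt w \<and> val w = g"
  using gen_ex fp unfolding is_free_product_def by blast

definition wc :: "(bool\<times>'a) list \<Rightarrow> bool" where "wc w \<longleftrightarrow> (\<forall>fx\<in>set w. snd fx \<in> carrier G)"

lemma wc_val: "wc w \<Longrightarrow> val w \<in> carrier G"
  by (induction w) (auto simp: wc_def word_val_def)

lemma wc_alt: "alt w \<Longrightarrow> wc w"
  unfolding wc_def alt_word_def by (auto split: if_splits)

lemma wc_Nil[simp]: "wc []" by (simp add: wc_def)
lemma wc_append[simp]: "wc (u @ v) \<longleftrightarrow> wc u \<and> wc v" by (auto simp: wc_def)
lemma wc_Cons[simp]: "wc ((f,x)#v) \<longleftrightarrow> x \<in> carrier G \<and> wc v" by (auto simp: wc_def)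

lemma val_app: "wc u \<Longrightarrow> wc v \<Longrightarrow> val (u @ v) = val u \<otimes> val v"
  by (induction u) (auto simp: wc_val m_assoc)



lemma invw_Cons: "invw G ((f,x)#w) = invw G w @ [(f, inv x)]"
  by (simp add: invw_def)

lemma invw: "alt w \<Longrightarrow> alt (invw G w) \<and> val (invw G w) = inv (val w) \<and> length (invw G w) = length w
   \<and> (w \<noteq> [] \<longrightarrow> fst (last (invw G w)) = fst (hd w))"
proof (induction w)
  case Nil then show ?case by (simp add: invw_def)
next
  case (Cons a w)
  obtain f x where a: "a = (f,x)" by force
  have x: "x \<in> fac f - {\<one>}" and w: "alt w" and h: "w \<noteq> [] \<longrightarrow> fst (hd w) \<noteq> f"
    using Cons.prems(1) unfolding a alt_Cons by auto
  have xc: "x \<in> carrier G" using fac_carr[OF DiffD1[OF x]] .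
  have ix: "inv x \<in> fac f - {\<one>}" using fac_inv[OF DiffD1[OF x]] x xc by simp
  have IH: "alt (invw G w) \<and> val (invw G w) = inv (val w) \<and> length (invw G w) = length w
   \<and> (w \<noteq> [] \<longrightarrow> fst (last (invw G w)) = fst (hd w))" using Cons.IH w by blast
  have al: "alt (invw G w @ [(f, inv x)])" unfolding alt_append using IH ix h
    by (auto simp: alt_Cons simp del: Diff_iff)
  have "val (invw G w @ [(f, inv x)]) = inv (val w) \<otimes> inv x"
    using val_app[of "invw G w" "[(f, inv x)]"] wc_alt IH ix xc by simp
  also have "\<dots> = inv (x \<otimes> val w)" using xc alt_carr[OF w] by (simp add: inv_mult_group)
  finally show ?case using al IH unfolding a invw_Cons by simp
qed


end

context fprod begin

lemma conj_rot:
  assumes "alt w"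
  shows "alt u \<Longrightarrow> alt v \<Longrightarrow> u \<noteq> [] \<Longrightarrow> fst (hd u) \<noteq> fst (last u) \<Longrightarrow> even (length u)
    \<Longrightarrow> even (length v) \<Longrightarrow> val u \<otimes> val w = val w \<otimes> val v \<Longrightarrow> \<exists>k. v = rotate k u"
  using assms
proof (induction w arbitrary: u)
  case Nil
  then have "val u = val v" using alt_carr[of u] alt_carr[of v] by simp
  then have "v = u" using uniq[OF Nil.prems(1) Nil.prems(2)] by (metis sym)
  then show ?case by (intro exI[of _ 0]) simp
next
  case (Cons b w')
  obtain f c where b: "b = (f,c)" by force
  have c: "c \<in> fac f - {\<one>}" and w': "alt w'" and hw': "w' \<noteq> [] \<longrightarrow> fst (hd w') \<noteq> f"
    using Cons.prems(8) unfolding b alt_Cons by auto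
  have cc: "c \<in> carrier G" using fac_carr[OF DiffD1[OF c]] .
  define g' where "g' = val w'"
  have g'c: "g' \<in> carrier G" unfolding g'_def using alt_carr[OF w'] .
  have g: "val (b#w') = c \<otimes> g'" unfolding b g'_def by simp
  have uc: "val u \<in> carrier G" and vc: "val v \<in> carrier G" using alt_carr Cons.prems by auto
  have hyp: "val u \<otimes> (c \<otimes> g') = (c \<otimes> g') \<otimes> val v" using Cons.prems(7) g by simp
  have vval: "val v = inv (c \<otimes> g') \<otimes> (val u \<otimes> (c \<otimes> g'))"
    using inv_solve_left[of "val v" "c \<otimes> g'" "val u \<otimes> (c \<otimes> g')"] hyp uc vc cc g'c by simp
  obtain f1 x1 where h1: "hd u = (f1,x1)" by force
  obtain fl xl where hl: "last u = (fl,xl)" by force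
  have ffl: "f1 \<noteq> fl" using Cons.prems(4) h1 hl by simp
  have len2: "2 \<le> length u"
  proof (rule ccontr)
    assume "\<not> 2 \<le> length u"
    moreover have "length u \<noteq> 0" using Cons.prems(3) by simp
    ultimately have "length u = 1" by linarith
    then have "hd u = last u" by (cases u) auto
    then show False using ffl h1 hl by simp
  qed
  have tlne: "tl u \<noteq> []" and blne: "butlast u \<noteq> []" using len2 by (cases u; auto)+
  have uht: "u = (f1,x1) # tl u" using h1 Cons.prems(3) by (metis list.collapse)
  have ubl: "u = butlast u @ [(fl,xl)]" using hl Cons.prems(3) by (metis append_butlast_last_id)
  have altu1: "x1 \<in> fac f1 - {\<one>} \<and> alt (tl u) \<and> fst (hd (tl u)) \<noteq> f1"
    using Cons.prems(1) tlne alt_Cons[of f1 x1 "tl u"] uht by simp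
  have altu2': "alt (butlast u) \<and> alt [(fl,xl)] \<and> fst (last (butlast u)) \<noteq> fl"
    using Cons.prems(1) blne alt_append[of "butlast u" "[(fl,xl)]"] ubl by simp
  then have altu2: "alt (butlast u) \<and> xl \<in> fac fl - {\<one>} \<and> fst (last (butlast u)) \<noteq> fl"
    using alt_Cons[of fl xl "[]"] by simp
  have x1c: "x1 \<in> carrier G" using fac_carr[of x1 f1] altu1 by simp
  have xlc: "xl \<in> carrier G" using fac_carr[of xl fl] altu2 by simp
  have lasttl: "last (tl u) = (fl,xl)" using last_tl[of u] tlne hl by simp
  have hdbl: "hd (butlast u) = (f1,x1)" using h1 blne ubl by (metis hd_append2)
  have wcu: "wc (tl u)" "wc (butlast u)" using altu1 altu2 wc_alt by auto
  have wcw': "wc w'" using wc_alt w' by blast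
  have valu1: "val u = x1 \<otimes> val (tl u)" using arg_cong[OF uht, of val] by simp
  have valu2: "val u = val (butlast u) \<otimes> xl"
    using arg_cong[OF ubl, of val] val_app[of "butlast u" "[(fl,xl)]"] wcu xlc by simp
  have tuc: "val (tl u) \<in> carrier G" and buc: "val (butlast u) \<in> carrier G" using wcu wc_val by auto
  have noodd: False if W: "alt W" "val W = val v" "odd (length W)" for W
    using uniq[OF Cons.prems(2) W(1,2)] W(3) Cons.prems(6) by simp
  have lw: "length (invw G (b#w')) = Suc (length w')" "length (invw G w') = length w'"
    using invw[OF Cons.prems(8)] invw[OF w'] by simp_all
  have iwne: "invw G w' \<noteq> [] \<longleftrightarrow> w' \<noteq> []" "invw G (b#w') \<noteq> []" using lw by auto
  show ?case
  proof (cases "f = f1")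
    case True
    show ?thesis
    proof (cases "c = x1")
      case True
      define u1 where "u1 = tl u @ [(f1,x1)]"
      have au1: "alt u1" unfolding u1_def
        using alt_append[of "tl u" "[(f1,x1)]"] altu1 lasttl ffl tlne alt_Cons[of f1 x1 "[]"] by simp
      have hu1: "fst (hd u1) \<noteq> fst (last u1)" unfolding u1_def using altu1 tlne by simp
      have "length u1 = length u" unfolding u1_def using Cons.prems(3) by (cases u) auto
      then have lu1: "even (length u1)" "u1 \<noteq> []" using Cons.prems(5) Cons.prems(3) by auto
      have vu1: "val u1 = val (tl u) \<otimes> x1" unfolding u1_def using val_app wcu x1c by simp
      have "val u1 \<otimes> g' = inv c \<otimes> (val u \<otimes> (c \<otimes> g'))"
        unfolding vu1 valu1 \<open>c = x1\<close> using x1c tuc g'c by (simp add: m_assoc[symmetric])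
      also have "\<dots> = g' \<otimes> val v" unfolding hyp using cc g'c vc by (simp add: m_assoc[symmetric])
      finally have "val u1 \<otimes> val w' = val w' \<otimes> val v" unfolding g'_def .
      then obtain k where "v = rotate k u1" using Cons.IH[OF au1 Cons.prems(2) lu1(2) hu1 lu1(1) Cons.prems(6) _ w']
        by blast
      moreover have "u1 = rotate 1 u" unfolding u1_def using rotate1_hd_tl[of u] Cons.prems(3) h1 by simp
      ultimately have "v = rotate (k + 1) u" by (simp add: rotate1_rotate_swap)
      then show ?thesis by blast
    next
      case False
      define W where "W = invw G w' @ ((f, inv c \<otimes> x1) # (tl u @ (b # w')))"
      have icx0: "inv c \<otimes> x1 \<in> fac f" using fac_mult[OF fac_inv[OF DiffD1[OF c]], of x1] altu1 \<open>f = f1\<close> by simp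
      have icx1: "inv c \<otimes> x1 \<noteq> \<one>"
      proof
        assume "inv c \<otimes> x1 = \<one>"
        then have "inv x1 = inv c" using inv_equality[of "inv c" x1] cc x1c by simp
        then have "x1 = c" using cc x1c by (metis inv_inv)
        then show False using False by simp
      qed
      have aW: "alt W" unfolding W_def alt_append using invw[OF w'] icx0 icx1 altu1 Cons.prems(8) lasttl ffl hw' tlne b \<open>f = f1\<close> iwne
        by (simp add: alt_append alt_Cons)
      have "val W = inv g' \<otimes> (inv c \<otimes> x1 \<otimes> (val (tl u) \<otimes> (c \<otimes> g')))"
        unfolding W_def using invw[OF w'] wcu wcw' val_app cc x1c b g'_def wc_alt
        by simp
      also have "\<dots> = val v" using vval valu1 cc g'c x1c tuc by (simp add: m_assoc inv_mult_group)
      finally have vW: "val W = val v" .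
      have "length W = 2 * length w' + length u + 1" unfolding W_def using lw len2 by simp
      then have "odd (length W)" using Cons.prems(5) by simp
      then show ?thesis using noodd[OF aW vW] by simp
    qed
  next
    case False
    then have ffl': "f = fl" using ffl by auto
    show ?thesis
    proof (cases "c = inv xl")
      case True
      define u2 where "u2 = (fl,xl) # butlast u"
      have au2: "alt u2" unfolding u2_def using altu2 hdbl ffl blne alt_Cons[of fl xl "butlast u"] by simp
      have hu2: "fst (hd u2) \<noteq> fst (last u2)" unfolding u2_def using altu2 blne by simp
      have lu: "length u2 = length u" unfolding u2_def using Cons.prems(3) by (cases u rule: rev_cases) auto
      then have lu2: "even (length u2)" "u2 \<noteq> []" using Cons.prems(5) Cons.prems(3) by auto
      have "val u2 \<otimes> g' = xl \<otimes> val (butlast u) \<otimes> g'" unfolding u2_def by simp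
      also have "\<dots> = inv c \<otimes> (val u \<otimes> (c \<otimes> g'))"
      proof -
        have aux: "xl \<otimes> (inv xl \<otimes> g') = g'" using xlc g'c by (simp add: m_assoc[symmetric])
        show ?thesis unfolding valu2 True using xlc buc g'c aux by (simp add: m_assoc)
      qed
      also have "\<dots> = g' \<otimes> val v" unfolding hyp using cc g'c vc by (simp add: m_assoc[symmetric])
      finally have "val u2 \<otimes> val w' = val w' \<otimes> val v" unfolding g'_def .
      then obtain k where k: "v = rotate k u2" using Cons.IH[OF au2 Cons.prems(2) lu2(2) hu2 lu2(1) Cons.prems(6) _ w']
        by blast
      have r1: "rotate 1 u2 = u" unfolding u2_def using ubl by simp
      have "rotate (length u - 1) u = rotate (length u - 1 + 1) u2" using r1 rotate_rotate[of "length u - 1" 1 u2] by simp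
      also have "\<dots> = u2"
      proof -
        have e: "length u - 1 + 1 = length u2" using len2 lu by simp
        show ?thesis by (simp only: e) (rule rotate_id, simp)
      qed
      finally have "v = rotate k (rotate (length u - 1) u)" using k by simp
      then have "v = rotate (k + (length u - 1)) u" by (simp only: rotate_rotate)
      then show ?thesis by blast
    next
      case False
      define W where "W = invw G (b#w') @ (butlast u @ ((f, xl \<otimes> c) # w'))"
      have xc0: "xl \<otimes> c \<in> fac f" using fac_mult[of xl f c] altu2 c ffl' by simp
      have xc1: "xl \<otimes> c \<noteq> \<one>"
      proof
        assume "xl \<otimes> c = \<one>"
        then have "inv c = xl" using inv_equality[of xl c] cc xlc by simp
        then have "c = inv xl" using cc xlc by (metis inv_inv)
        then show False using False by simp
      qed
      have aW: "alt W" unfolding W_def alt_append using invw[OF Cons.prems(8)] xc0 xc1 altu2 w' hw' blne hdbl ffl ffl' b iwne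
        by (simp add: alt_append alt_Cons)
      have "val W = inv (c \<otimes> g') \<otimes> (val (butlast u) \<otimes> (xl \<otimes> c \<otimes> g'))"
        unfolding W_def using invw[OF Cons.prems(8)] wcu wcw' val_app cc xlc b g'_def wc_alt g
        by simp
      also have "\<dots> = val v" using vval valu2 cc g'c xlc buc by (simp add: m_assoc)
      finally have vW: "val W = val v" .
      have "length W = 2 * length w' + length u + 1" unfolding W_def using lw len2 b by simp
      then have "odd (length W)" using Cons.prems(5) by simp
      then show ?thesis using noodd[OF aW vW] by simp
    qed
  qed
qed

end


lemma cyc_pow_in: "1 \<le> i \<Longrightarrow> i \<le> m \<Longrightarrow> (cyc m ^^ k) i = ((i - 1 + k) mod m) + 1"
proof (induction k)
  case 0 then show ?case by simp
next
  case (Suc k)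
  have "m > 0" using Suc by simp
  then have "1 \<le> (i - 1 + k) mod m + 1 \<and> (i - 1 + k) mod m + 1 \<le> m" by (simp add: Suc_leI)
  then show ?case using Suc by (simp add: cyc_def mod_Suc_eq)
qed

lemma cyc_pow_out: "\<not> (1 \<le> i \<and> i \<le> m) \<Longrightarrow> (cyc m ^^ k) i = i"
  by (induction k) (auto simp: cyc_def)

lemma cyc_pow_range: "1 \<le> i \<Longrightarrow> i \<le> m \<Longrightarrow> 1 \<le> (cyc m ^^ k) i \<and> (cyc m ^^ k) i \<le> m"
  using cyc_pow_in[of i m k] by (simp add: Suc_leI)

lemma cyc_pow_m: "0 < m \<Longrightarrow> (cyc m ^^ k) ^^ m = id"
proof
  fix i assume m: "0 < m"
  show "((cyc m ^^ k) ^^ m) i = id i"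
  proof (cases "1 \<le> i \<and> i \<le> m")
    case True
    have "(i - 1 + k*m) mod m = (i - 1) mod m" by simp
    also have "\<dots> = i - 1" using True by (auto intro: mod_less)
    finally have "(i - 1 + k*m) mod m + 1 = i" using True by simp
    then show ?thesis unfolding funpow_mult using cyc_pow_in[of i m "k*m"] True by (simp only: id_apply)
  next
    case False
    then show ?thesis unfolding funpow_mult using cyc_pow_out[of i m "k*m"] by simp
  qed
qed

lemma alt_prod_eq:
  assumes grp: "group G" and cas: "\<forall>i \<in> {1..m}. as i \<in> carrier G" and cxs: "\<forall>i \<in> {1..m}. xs i \<in> carrier G"
  shows "n \<le> m \<Longrightarrow> r \<in> carrier G \<Longrightarrow> foldr (\<lambda>i r. as i \<otimes>\<^bsub>G\<^esub> xs i \<otimes>\<^bsub>G\<^esub> r) [1..<Suc n] r =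
     foldr (\<lambda>fx r. snd fx \<otimes>\<^bsub>G\<^esub> r) (map (\<lambda>j. (even j, if even j then as (j div 2 + 1) else xs (j div 2 + 1))) [0..<2*n]) r"
proof (induction n arbitrary: r)
  case 0 then show ?case by simp
next
  case (Suc n)
  have c1: "as (Suc n) \<in> carrier G" "xs (Suc n) \<in> carrier G" using Suc.prems cas cxs by auto
  have e: "[0..<2 * Suc n] = [0..<2*n] @ [2*n, Suc (2*n)]" by (simp add: upt_conv_Cons)
  have "foldr (\<lambda>i r. as i \<otimes>\<^bsub>G\<^esub> xs i \<otimes>\<^bsub>G\<^esub> r) [1..<Suc (Suc n)] r =
     foldr (\<lambda>i r. as i \<otimes>\<^bsub>G\<^esub> xs i \<otimes>\<^bsub>G\<^esub> r) [1..<Suc n] (as (Suc n) \<otimes>\<^bsub>G\<^esub> (xs (Suc n) \<otimes>\<^bsub>G\<^esub> r))"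
    using c1 Suc.prems group.is_monoid[OF grp] by (simp add: monoid.m_assoc)
  also have "\<dots> = foldr (\<lambda>fx r. snd fx \<otimes>\<^bsub>G\<^esub> r) (map (\<lambda>j. (even j, if even j then as (j div 2 + 1) else xs (j div 2 + 1))) [0..<2*n]) (as (Suc n) \<otimes>\<^bsub>G\<^esub> (xs (Suc n) \<otimes>\<^bsub>G\<^esub> r))"
    using Suc.IH Suc.prems c1 group.is_monoid[OF grp] by (simp add: monoid.m_closed)
  finally show ?case unfolding e by simp
qed

lemma gen_foldr:
  assumes "\<forall>i \<in> set l. as i \<in> S \<and> xs i \<in> S"
  shows "foldr (\<lambda>i r. as i \<otimes>\<^bsub>G\<^esub> xs i \<otimes>\<^bsub>G\<^esub> r) l \<one>\<^bsub>G\<^esub> \<in> generate G S"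
  using assms by (induction l) (auto intro: generate.intros)

theorem lemma4p1:
  fixes G :: "('a, 'b) monoid_scheme"
    and F0 X0 X1 :: "'a set" and h :: "'a \<Rightarrow> 'a" and p m :: nat
    and a :: 'a and as xs :: "nat \<Rightarrow> 'a"
  defines "H \<equiv> generate G (X0 \<union> X1)"
  assumes free1: "is_free_product G F0 H"
    and free2: "is_free_product (G\<lparr>carrier := H\<rparr>) X0 X1"
    and h_aut: "h \<in> iso G G"
    and h_F0: "\<forall>x \<in> F0. h x = x"
    and h_H: "h ` H = H"
    and p_prime: "Factorial_Ring.prime p"
    and h_ord: "(\<forall>x \<in> H. (h ^^ p) x = x) \<and> (\<forall>n. 0 < n \<and> n < p \<longrightarrow> (\<exists>x \<in> H. (h ^^ n) x \<noteq> x))"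
    and h_fix: "{x \<in> H. h x = x} = X0"
    and a_conj: "\<exists>g \<in> carrier G. h a = inv\<^bsub>G\<^esub> g \<otimes>\<^bsub>G\<^esub> a \<otimes>\<^bsub>G\<^esub> g"
    and a_in: "a \<in> carrier G"
    and a_notin: "a \<notin> generate G (F0 \<union> X0) \<union> H"
    and m_pos: "1 \<le> m"
    and as_in: "\<forall>i \<in> {1..m}. as i \<in> F0 - {\<one>\<^bsub>G\<^esub>}"
    and xs_in: "\<forall>i \<in> {1..m}. xs i \<in> H - {\<one>\<^bsub>G\<^esub>}"
    and a_eq: "a = alt_prod G as xs m"
  shows "\<exists>k. let \<sigma> = cyc m ^^ k in
           (\<forall>i \<in> {1..m}. as i = as (\<sigma> i) \<and> h (xs i) = xs (\<sigma> i)) \<and> p dvd perm_order \<sigma>"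
proof -
  interpret fprod G F0 H by (unfold_locales) (rule free1)
  interpret hh: group_hom G G h
    using h_aut by (simp add: group_hom_def group_hom_axioms_def iso_def is_group)
  have hinj: "inj_on h (carrier G)" using h_aut by (simp add: iso_def bij_betw_def)
  have cas: "\<forall>i \<in> {1..m}. as i \<in> carrier G" using as_in fac_carr[of _ True] by auto
  have cxs: "\<forall>i \<in> {1..m}. xs i \<in> carrier G" using xs_in fac_carr[of _ False] by auto
  define \<phi> where "\<phi> = (\<lambda>j. (even j, if even j then as (j div 2 + 1) else xs (j div 2 + 1)))"
  define u where "u = map \<phi> [0..<2*m]"
  have lu: "length u = 2*m" unfolding u_def by simp
  have unth: "u ! j = \<phi> j" if "j < 2*m" for j unfolding u_def using that by simp
  have jr: "j div 2 + 1 \<in> {1..m}" if "j < 2*m" for j using that by auto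
  have au: "alt u" unfolding alt_word_def
  proof (intro conjI allI impI ballI)
    fix fx assume "fx \<in> set u"
    then obtain j where j: "j < 2*m" "fx = \<phi> j" unfolding u_def by auto
    then show "snd fx \<in> (if fst fx then F0 else H) - {\<one>\<^bsub>G\<^esub>}" using jr[OF j(1)] as_in xs_in unfolding \<phi>_def by auto
  next
    fix i assume "Suc i < length u"
    then show "fst (u ! i) \<noteq> fst (u ! Suc i)" using unth lu unfolding \<phi>_def by auto
  qed
  have vu: "val u = a" unfolding a_eq alt_prod_def word_val_def u_def \<phi>_def
    using alt_prod_eq[OF is_group cas cxs, of m "\<one>\<^bsub>G\<^esub>"] by simp
  define hu where "hu = map (\<lambda>(f,x). (f, h x)) u"
  have hlet: "h x \<in> fac f - {\<one>\<^bsub>G\<^esub>}" if "x \<in> fac f - {\<one>\<^bsub>G\<^esub>}" for x f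
  proof -
    have xc: "x \<in> carrier G" using that fac_carr by blast
    have "h x \<noteq> \<one>\<^bsub>G\<^esub>" using hinj xc that hh.hom_one by (metis DiffD2 inj_on_contraD one_closed singletonI)
    moreover have "h x \<in> fac f" using that h_F0 h_H by (cases f) auto
    ultimately show ?thesis by simp
  qed
  have ahu: "alt (map (\<lambda>(f,x). (f, h x)) w) \<and> val (map (\<lambda>(f,x). (f, h x)) w) = h (val w)" if "alt w" for w
    using that
  proof (induction w)
    case Nil then show ?case by simp
  next
    case (Cons b w)
    obtain f x where b: "b = (f,x)" by force
    have x: "x \<in> fac f - {\<one>\<^bsub>G\<^esub>}" and w: "alt w" and hw: "w \<noteq> [] \<longrightarrow> fst (hd w) \<noteq> f"
      using Cons.prems unfolding b alt_Cons by auto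
    have IH: "alt (map (\<lambda>(f,x). (f, h x)) w) \<and> val (map (\<lambda>(f,x). (f, h x)) w) = h (val w)"
      using Cons.IH w by simp
    have "fst (hd (map (\<lambda>(f,x). (f, h x)) w)) = fst (hd w)" if "w \<noteq> []" using that by (cases w) auto
    then show ?case using IH hlet[OF x] hw x fac_carr[of x f] alt_carr[OF w] unfolding b
      by (auto simp: alt_Cons simp del: Diff_iff)
  qed
  have ahu': "alt hu" "val hu = h a" using ahu[OF au] vu unfolding hu_def by auto
  obtain g where gc: "g \<in> carrier G" and hg: "h a = inv\<^bsub>G\<^esub> g \<otimes>\<^bsub>G\<^esub> a \<otimes>\<^bsub>G\<^esub> g" using a_conj by blast
  obtain w where aw: "alt w" and vw: "val w = g" using word_ex[OF gc] by blast
  have hac: "h a \<in> carrier G" using a_in by simp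
  have aux: "g \<otimes>\<^bsub>G\<^esub> (inv\<^bsub>G\<^esub> g \<otimes>\<^bsub>G\<^esub> (a \<otimes>\<^bsub>G\<^esub> g)) = a \<otimes>\<^bsub>G\<^esub> g"
    using gc a_in by (simp add: m_assoc[symmetric])
  have eqc: "val u \<otimes>\<^bsub>G\<^esub> val w = val w \<otimes>\<^bsub>G\<^esub> val hu" using hg gc a_in hac unfolding vu vw ahu'(2)
    by (simp add: m_assoc aux)
  have une: "u \<noteq> []" using lu m_pos by auto
  have hdu: "fst (hd u) = True" using unth[of 0] m_pos une by (simp add: hd_conv_nth \<phi>_def)
  have lastu: "fst (last u) = False" using unth[of "2*m - 1"] m_pos une lu
    by (simp add: last_conv_nth \<phi>_def)
  obtain k where rk: "hu = rotate k u"
    using conj_rot[OF aw au ahu'(1) une _ _ _ eqc] hdu lastu lu unfolding hu_def by auto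
  define t where "t = k mod (2*m) div 2"
  have hun: "hu ! j = u ! ((k + j) mod (2*m))" if "j < 2*m" for j
    using rk nth_rotate[of j u k] that lu by simp
  have hun2: "hu ! j = (fst (u ! j), h (snd (u ! j)))" if "j < 2*m" for j
    unfolding hu_def using that lu by (simp add: case_prod_beta)
  have mpos: "0 < m" using m_pos by simp
  have ek: "even (k mod (2*m))"
  proof -
    have "(k + 0) mod (2*m) < 2*m" using mpos by simp
    then have "fst (hu ! 0) = even (k mod (2*m))" using hun[of 0] mpos unth by (simp add: \<phi>_def)
    moreover have "fst (hu ! 0) = True" using hun2[of 0] unth[of 0] mpos by (simp add: \<phi>_def)
    ultimately show ?thesis by simp
  qed
  have tlt: "t < m"
  proof -
    have "k mod (2*m) < 2 * m" using mod_less_divisor[of "2*m" k] mpos by linarith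
    then have "k mod (2*m) < m * 2" by (simp only: mult.commute)
    then show ?thesis unfolding t_def by (simp add: div_less_iff_less_mult)
  qed
  have kmod: "k mod (2*m) = 2*t" unfolding t_def using ek by simp
  define \<sigma> where "\<sigma> = cyc m ^^ t"
  have key: "as i = as (\<sigma> i) \<and> h (xs i) = xs (\<sigma> i)" if i: "i \<in> {1..m}" for i
  proof -
    define q where "q = (i - 1 + t) mod m"
    have sq: "\<sigma> i = q + 1" unfolding \<sigma>_def q_def using cyc_pow_in[of i m t] i by simp
    have qlt: "q < m" unfolding q_def using mpos by simp
    have j1: "2*(i-1) < 2*m" "2*(i-1) + 1 < 2*m" using i by auto
    have m1: "(k + 2*(i-1)) mod (2*m) = 2*q"
    proof -
      have "(k + 2*(i-1)) mod (2*m) = (k mod (2*m) + 2*(i-1)) mod (2*m)" by (simp only: mod_add_left_eq)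
      also have "\<dots> = (2*(t + (i-1))) mod (2*m)" using kmod by (simp add: algebra_simps)
      also have "\<dots> = 2*q" unfolding q_def mod_mult_mult1 by (simp add: add.commute)
      finally show ?thesis .
    qed
    have m2: "(k + (2*(i-1) + 1)) mod (2*m) = 2*q + 1"
    proof -
      have "(k + (2*(i-1)+1)) mod (2*m) = (k mod (2*m) + (2*(i-1)+1)) mod (2*m)" by (simp only: mod_add_left_eq)
      also have "\<dots> = (2*(t + (i-1)) + 1) mod (2*m)" using kmod by (simp add: algebra_simps)
      also have "\<dots> = 2*q + 1" unfolding q_def mod_mult2_eq by (simp add: add.commute)
      finally show ?thesis .
    qed
    have "hu ! (2*(i-1)) = u ! (2*q)" using hun[OF j1(1)] m1 by simp
    then have e1: "h (as i) = as (q+1)" using hun2[OF j1(1)] unth[OF j1(1)] unth[of "2*q"] qlt i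
      by (simp add: \<phi>_def)
    have "hu ! (2*(i-1)+1) = u ! (2*q+1)" using hun[OF j1(2)] m2 by simp
    then have e2: "h (xs i) = xs (q+1)" using hun2[OF j1(2)] unth[OF j1(2)] unth[of "2*q+1"] qlt i
      by (simp add: \<phi>_def)
    have "h (as i) = as i" using h_F0 as_in i by auto
    then show ?thesis using e1 e2 sq by simp
  qed
  have sm: "\<sigma> ^^ m = id" unfolding \<sigma>_def using cyc_pow_m[OF mpos] .
  define d where "d = perm_order \<sigma>"
  have dd: "0 < d \<and> \<sigma> ^^ d = id" unfolding d_def perm_order_def
    by (rule LeastI[of _ m]) (use sm mpos in simp)
  have srange: "\<sigma> i \<in> {1..m}" if "i \<in> {1..m}" for i
    using cyc_pow_range[of i m t] that unfolding \<sigma>_def by auto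
  have hpow: "\<forall>i \<in> {1..m}. (h ^^ n) (xs i) = xs ((\<sigma> ^^ n) i) \<and> (\<sigma> ^^ n) i \<in> {1..m}" for n
  proof (induction n)
    case 0 then show ?case by simp
  next
    case (Suc n)
    show ?case
    proof
      fix i assume i: "i \<in> {1..m}"
      then show "(h ^^ Suc n) (xs i) = xs ((\<sigma> ^^ Suc n) i) \<and> (\<sigma> ^^ Suc n) i \<in> {1..m}"
        using Suc key srange by simp
    qed
  qed
  have "p dvd d"
  proof (rule ccontr)
    assume nd: "\<not> p dvd d"
    have "coprime p d" using prime_imp_coprime[OF p_prime nd] .
    then have gcd1: "gcd d p = 1" by (simp add: coprime_iff_gcd_eq_1 gcd.commute)
    obtain x y where xy: "d * x = p * y + 1" using bezout_nat[of d p] dd gcd1 by auto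
    have fixd: "(h ^^ d) (xs i) = xs i" if "i \<in> {1..m}" for i using hpow[of d] that dd by simp
    have fixdx: "((h ^^ d) ^^ n) (xs i) = xs i" if "i \<in> {1..m}" for i n
      by (induction n) (simp_all add: fixd[OF that])
    have hH: "(h ^^ n) x \<in> H" if "x \<in> H" for x n using that h_H by (induction n) auto
    have fixpy: "((h ^^ p) ^^ n) x = x" if "x \<in> H" for x n
      using that h_ord hH by (induction n) auto
    have fixall: "h (xs i) = xs i" if i: "i \<in> {1..m}" for i
    proof -
      have "xs i = (h ^^ (d * x)) (xs i)" using fixdx[OF i, of x] by (simp add: funpow_mult)
      also have "\<dots> = (h ^^ (1 + p * y)) (xs i)" using xy by (simp add: add.commute)
      also have "\<dots> = h (((h ^^ p) ^^ y) (xs i))" by (simp add: funpow_add funpow_mult)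
      also have "\<dots> = h (xs i)" using fixpy xs_in i by simp
      finally show ?thesis by simp
    qed
    have "\<forall>i \<in> set [1..<Suc m]. as i \<in> F0 \<union> X0 \<and> xs i \<in> F0 \<union> X0"
      using as_in xs_in fixall h_fix by auto
    then have "a \<in> generate G (F0 \<union> X0)" unfolding a_eq alt_prod_def by (rule gen_foldr)
    then show False using a_notin by simp
  qed
  then show ?thesis unfolding Let_def using key unfolding \<sigma>_def d_def by blast
qed


end
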